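(* For every rational $c$ for which $f_c(x)=x^2+c$ has a rational $3$-cycle, the numerator of the rational number $c^3+2c^2+c+1$ (in lowest terms) is divisible by at least three distinct primes.
   Context: A rational $3$-cycle of $f_c$ is the orbit of a rational point of minimal period $3$ under $f_c$. *)

theory Defs
  imports Complex_Main "HOL-Computational_Algebra.Primes"
begin

definition fc :: "rat \<Rightarrow> rat \<Rightarrow> rat" where
  "fc c x = x ^ 2 + c"

definition minimal_period :: "('a \<Rightarrow> 'a) \<Rightarrow> nat \<Rightarrow> 'a \<Rightarrow> bool" where
  "minimal_period f n x \<longleftrightarrow> n > 0 \<and> (f ^^ n) x = x \<and> (\<forall>k. 0 < k \<and> k < n \<longrightarrow> (f ^^ k) x \<noteq> x)"

definition has_rational_3_cycle :: "rat \<Rightarrow> bool" where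
  "has_rational_3_cycle c \<longleftrightarrow> (\<exists>x::rat. minimal_period (fc c) 3 x)"

definition rat_numerator :: "rat \<Rightarrow> int" where
  "rat_numerator q = fst (quotient_of q)"

end

theory Submission
  imports Defs
begin


lemma cycle_param:
  assumes "has_rational_3_cycle c"
  obtains a :: rat where "a \<noteq> 0" "a \<noteq> -1"
    "4*a^2*(1+a)^2*c = -(a^6+2*a^5+4*a^4+8*a^3+9*a^2+4*a+1)"
proof -
  obtain x0 where mp: "minimal_period (fc c) 3 x0" using assms has_rational_3_cycle_def by blast
  define x1 where "x1 = x0^2 + c"
  define x2 where "x2 = x1^2 + c"
  have f1: "(fc c ^^ 1) x0 = x1" by (simp add: fc_def x1_def)
  have f2: "(fc c ^^ 2) x0 = x2" by (simp add: fc_def x1_def x2_def numeral_2_eq_2)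
  have f3: "(fc c ^^ 3) x0 = x2^2 + c" by (simp add: fc_def x1_def x2_def numeral_3_eq_3)
  from mp have e0: "x0 = x2^2 + c" and n1: "x1 \<noteq> x0" and n2: "x2 \<noteq> x0"
    unfolding minimal_period_def using f1 f2 f3 by force+
  have n12: "x1 \<noteq> x2"
  proof
    assume "x1 = x2"
    then have "x0 = x1" using e0 x2_def by simp
    then show False using n1 by simp
  qed
  define a where "a = x0 + x1"
  define b where "b = x1 + x2"
  define d where "d = x2 + x0"
  have r1: "x1 - x2 = (x0 - x1)*a" unfolding a_def x2_def x1_def by algebra
  have r2: "x2 - x0 = (x1 - x2)*b" unfolding b_def x2_def e0 by (simp add: e0 algebra_simps power2_eq_square)
  have r3: "x0 - x1 = (x2 - x0)*d" unfolding d_def x1_def using e0 by (simp add: algebra_simps power2_eq_square)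
  have "(x0 - x1)*(1 + a + a*b) = 0" using r1 r2 r3 by algebra
  then have h1: "1 + a + a*b = 0" using n1 by simp
  have "(x0 - x1)*(1 - a*b*d) = 0" using r1 r2 r3 by algebra
  then have h2: "a*b*d = 1" using n1 by simp
  have a0: "a \<noteq> 0" using h2 by auto
  have a1: "a \<noteq> -1"
  proof
    assume "a = -1"
    then have "b = 0" using h1 by simp
    then show False using h2 by simp
  qed
  have x0e: "2*x0 = a + d - b" unfolding a_def b_def d_def by simp
  have ce: "c = x1 - x0^2" unfolding x1_def by simp
  have "4*a^2*(1+a)^2*c = -(a^6+2*a^5+4*a^4+8*a^3+9*a^2+4*a+1)"
    using h1 h2 x0e ce a_def by algebra
  then show ?thesis using that a0 a1 by blast
qed


lemma numer_dvd:
  fixes v :: rat and A B :: int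
  assumes "v * of_int B = of_int A" "B \<noteq> 0" "coprime A B"
  shows "A dvd rat_numerator v"
proof -
  obtain p q where pq: "quotient_of v = (p, q)" by (cases "quotient_of v")
  have q0: "q > 0" using quotient_of_denom_pos[OF pq] .
  have v: "v = of_int p / of_int q" using quotient_of_div[OF pq] .
  have "of_int p * of_int B = (of_int A * of_int q :: rat)" using assms(1) q0 unfolding v
    by (simp add: field_simps)
  then have "p * B = A * q" by (metis of_int_eq_iff of_int_mult)
  then have "A dvd p * B" by (metis dvd_triv_left)
  then have "A dvd p" using assms(3) by (simp add: coprime_dvd_mult_left_iff)
  then show ?thesis unfolding rat_numerator_def pq by simp
qed

lemma to_int:
  fixes a :: rat
  assumes "a \<noteq> 0" "a \<noteq> -1" "4*a^2*(1+a)^2*c = -(a^6+2*a^5+4*a^4+8*a^3+9*a^2+4*a+1)"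
  obtains m n :: int where "coprime m n" "n > 0" "m \<noteq> 0" "m + n \<noteq> 0"
    "of_int (4*m^2*n^2*(m+n)^2) * c = - of_int (m^6+2*m^5*n+4*m^4*n^2+8*m^3*n^3+9*m^2*n^4+4*m*n^5+n^6)"
proof -
  obtain m n where pq: "quotient_of a = (m, n)" by (cases "quotient_of a")
  have n0: "n > 0" using quotient_of_denom_pos[OF pq] .
  have cop: "coprime m n" using quotient_of_coprime[OF pq] .
  have av: "a = of_int m / of_int n" using quotient_of_div[OF pq] .
  have na: "of_int n * a = of_int m" using n0 av by simp
  have m0: "m \<noteq> 0" using assms(1) av by auto
  have mn0: "m + n \<noteq> 0"
  proof
    assume "m + n = 0"
    then have "m = -n" by simp
    then have "a = -1" using av n0 by simp
    then show False using assms(2) by simp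
  qed
  have "of_int (4*m^2*n^2*(m+n)^2) * c = - of_int (m^6+2*m^5*n+4*m^4*n^2+8*m^3*n^3+9*m^2*n^4+4*m*n^5+n^6)"
    unfolding of_int_mult of_int_add of_int_power of_int_minus of_int_numeral
    using assms(3) na by algebra
  then show ?thesis using that cop n0 m0 mn0 by blast
qed


lemma prime_not_common:
  fixes p a b :: int
  assumes "coprime a b" "prime p" "p dvd a" "p dvd b" shows False
proof -
  have "\<bar>p\<bar> = 1" using coprime_common_divisor_int[OF assms(1,3,4)] .
  then show False using assms(2) prime_gt_1_int by auto
qed

lemma L1:
  fixes a b X e U p :: int
  assumes "coprime a b" "X = e*a^k + b*U" "e = 1 \<or> e = -1" "prime p" "p dvd X" "p dvd b"
  shows False
proof -
  have "p dvd X - b*U" using assms(5,6) by simp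
  then have "p dvd e*a^k" using assms(2) by simp
  then have "p dvd a^k" using assms(3) by auto
  then have "p dvd a" using assms(4) prime_dvd_power by blast
  then show False using prime_not_common[OF assms(1,4)] assms(6) by blast
qed

lemma prime_dvd_2pow:
  fixes p :: int assumes "prime p" "p dvd 2^j" shows "p = 2"
proof -
  have "p dvd 2" using assms prime_dvd_power by blast
  then have "p \<le> 2" by (simp add: zdvd_imp_le)
  moreover have "p > 1" using assms(1) prime_gt_1_int by blast
  ultimately show ?thesis by simp
qed

lemma L2:
  fixes m n X Y U V U' V' p :: int
  assumes "coprime m n" "odd X" "U*X + V*Y = 2^j * n^K" "U'*X + V'*Y = 2^j' * m^K'"
    "prime p" "p dvd X" "p dvd Y"
  shows False
proof -
  have p2: "p \<noteq> 2" using assms(2,6) by auto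
  have "p dvd U*X + V*Y" using assms(6,7) by simp
  then have "p dvd 2^j * n^K" using assms(3) by simp
  then have "p dvd n" using p2 prime_dvd_2pow[OF assms(5)] assms(5)
    by (meson prime_dvd_mult_iff prime_dvd_power)
  have "p dvd U'*X + V'*Y" using assms(6,7) by simp
  then have "p dvd 2^j' * m^K'" using assms(4) by simp
  then have "p dvd m" using p2 prime_dvd_2pow[OF assms(5)] assms(5)
    by (meson prime_dvd_mult_iff prime_dvd_power)
  show False using prime_not_common[OF assms(1,5)] \<open>p dvd m\<close> \<open>p dvd n\<close> by blast
qed

lemma cop_sum: "coprime (m::int) n \<Longrightarrow> coprime n (m+n)"
proof -
  assume "coprime m n"
  then have "gcd n m = 1" by (simp add: coprime_iff_gcd_eq_1 gcd.commute)
  then have "gcd n (m + n) = 1" by (metis gcd_add2 add.commute)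
  then show "coprime n (m+n)" by (simp add: coprime_iff_gcd_eq_1)
qed

lemma three_primes:
  fixes a b c d :: int
  assumes nz: "a \<noteq> 0" "b \<noteq> 0" "c \<noteq> 0" "d \<noteq> 0"
    and cp: "\<And>p. prime p \<Longrightarrow> p dvd a \<Longrightarrow> p dvd b \<Longrightarrow> False"
       "\<And>p. prime p \<Longrightarrow> p dvd a \<Longrightarrow> p dvd c \<Longrightarrow> False"
       "\<And>p. prime p \<Longrightarrow> p dvd a \<Longrightarrow> p dvd d \<Longrightarrow> False"
       "\<And>p. prime p \<Longrightarrow> p dvd b \<Longrightarrow> p dvd c \<Longrightarrow> False"
       "\<And>p. prime p \<Longrightarrow> p dvd b \<Longrightarrow> p dvd d \<Longrightarrow> False"
       "\<And>p. prime p \<Longrightarrow> p dvd c \<Longrightarrow> p dvd d \<Longrightarrow> False"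
    and un: "\<not> (is_unit a \<and> is_unit b)" "\<not> (is_unit a \<and> is_unit c)" "\<not> (is_unit a \<and> is_unit d)"
       "\<not> (is_unit b \<and> is_unit c)" "\<not> (is_unit b \<and> is_unit d)" "\<not> (is_unit c \<and> is_unit d)"
  shows "\<exists>p q r :: int. prime p \<and> prime q \<and> prime r \<and> p \<noteq> q \<and> p \<noteq> r \<and> q \<noteq> r \<and>
           p dvd a*b*c*d \<and> q dvd a*b*c*d \<and> r dvd a*b*c*d"
proof -
  have ex: "\<And>x::int. x \<noteq> 0 \<Longrightarrow> \<not> is_unit x \<Longrightarrow> \<exists>p. p dvd x \<and> prime p"
    using prime_divisor_exists by blast
  have g: "\<And>x y z. \<lbrakk>x \<noteq> 0; y \<noteq> 0; z \<noteq> 0; \<not> is_unit x; \<not> is_unit y; \<not> is_unit z;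
        \<And>p. prime p \<Longrightarrow> p dvd x \<Longrightarrow> p dvd y \<Longrightarrow> False;
        \<And>p. prime p \<Longrightarrow> p dvd x \<Longrightarrow> p dvd z \<Longrightarrow> False;
        \<And>p. prime p \<Longrightarrow> p dvd y \<Longrightarrow> p dvd z \<Longrightarrow> False;
        x dvd a*b*c*d; y dvd a*b*c*d; z dvd a*b*c*d\<rbrakk> \<Longrightarrow>
      \<exists>p q r :: int. prime p \<and> prime q \<and> prime r \<and> p \<noteq> q \<and> p \<noteq> r \<and> q \<noteq> r \<and>
           p dvd a*b*c*d \<and> q dvd a*b*c*d \<and> r dvd a*b*c*d"
  proof -
    fix x y z :: int
    assume h: "x \<noteq> 0" "y \<noteq> 0" "z \<noteq> 0" "\<not> is_unit x" "\<not> is_unit y" "\<not> is_unit z"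
      "\<And>p. prime p \<Longrightarrow> p dvd x \<Longrightarrow> p dvd y \<Longrightarrow> False"
      "\<And>p. prime p \<Longrightarrow> p dvd x \<Longrightarrow> p dvd z \<Longrightarrow> False"
      "\<And>p. prime p \<Longrightarrow> p dvd y \<Longrightarrow> p dvd z \<Longrightarrow> False"
      "x dvd a*b*c*d" "y dvd a*b*c*d" "z dvd a*b*c*d"
    obtain p where p: "p dvd x" "prime p" using ex h by blast
    obtain q where q: "q dvd y" "prime q" using ex h by blast
    obtain r where r: "r dvd z" "prime r" using ex h by blast
    have "p \<noteq> q" using h(7) p q by blast
    moreover have "p \<noteq> r" using h(8) p r by blast
    moreover have "q \<noteq> r" using h(9) q r by blast
    moreover have "p dvd a*b*c*d" using p h(10) dvd_trans by blast
    moreover have "q dvd a*b*c*d" using q h(11) dvd_trans by blast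
    moreover have "r dvd a*b*c*d" using r h(12) dvd_trans by blast
    ultimately show "\<exists>p q r :: int. prime p \<and> prime q \<and> prime r \<and> p \<noteq> q \<and> p \<noteq> r \<and> q \<noteq> r \<and>
           p dvd a*b*c*d \<and> q dvd a*b*c*d \<and> r dvd a*b*c*d" using p q r by blast
  qed
  have da: "a dvd a*b*c*d" and db: "b dvd a*b*c*d" and dc: "c dvd a*b*c*d" and dd: "d dvd a*b*c*d"
    by (auto simp: mult.assoc mult.left_commute)
  show ?thesis
  proof (cases "is_unit a")
    case True
    show ?thesis by (rule g[of b c d]) (use nz cp un True da db dc dd in blast)+
  next
    case a: False
    show ?thesis
    proof (cases "is_unit b")
      case True
      show ?thesis by (rule g[of a c d]) (use nz cp un a True da db dc dd in blast)+
    next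
      case b: False
      show ?thesis
      proof (cases "is_unit c")
        case True
        show ?thesis by (rule g[of a b d]) (use nz cp un a b True da db dc dd in blast)+
      next
        case False
        show ?thesis by (rule g[of a b c]) (use nz cp un a b False da db dc dd in blast)+
      qed
    qed
  qed
qed
definition F1 :: "int \<Rightarrow> int \<Rightarrow> int" where "F1 m n = (m^3 + 2*m^2*n + m*n^2 + n^3)"

definition F2 :: "int \<Rightarrow> int \<Rightarrow> int" where "F2 m n = (m^3 - m*n^2 - n^3)"

definition F3 :: "int \<Rightarrow> int \<Rightarrow> int" where "F3 m n = (m^3 + 2*m^2*n + 3*m*n^2 + n^3)"

definition GG :: "int \<Rightarrow> int \<Rightarrow> int" where "GG m n = (- (m^9) - 2*m^8*n - m^7*n^2 - 9*m^6*n^3 - 19*m^5*n^4 + 26*m^3*n^6 + 21*m^2*n^7 + 7*m*n^8 + n^9)"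

lemma F1_odd: assumes "coprime m n" shows "odd (F1 m n)"
proof -
  have "\<not> (even m \<and> even n)" using assms prime_not_common[of m n 2] by auto
  then show ?thesis unfolding F1_def by auto
qed

lemma F2_odd: assumes "coprime m n" shows "odd (F2 m n)"
proof -
  have "\<not> (even m \<and> even n)" using assms prime_not_common[of m n 2] by auto
  then show ?thesis unfolding F2_def by auto
qed

lemma F3_odd: assumes "coprime m n" shows "odd (F3 m n)"
proof -
  have "\<not> (even m \<and> even n)" using assms prime_not_common[of m n 2] by auto
  then show ?thesis unfolding F3_def by auto
qed

lemma GG_odd: assumes "coprime m n" shows "odd (GG m n)"
proof -
  have "\<not> (even m \<and> even n)" using assms prime_not_common[of m n 2] by auto
  then show ?thesis unfolding GG_def by auto
qed

lemma F1_n: assumes "coprime m n" "prime p" "p dvd F1 m n" "p dvd n" shows False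
proof -
  have "F1 m n = (1)*m^3 + n*(2*m^2 + m*n + n^2)" unfolding F1_def by algebra
  then show False by (rule L1[OF assms(1) _ _ assms(2,3,4)]) simp
qed

lemma F1_m: assumes "coprime m n" "prime p" "p dvd F1 m n" "p dvd m" shows False
proof -
  have c: "coprime n m" using assms(1) by (simp add: coprime_commute)
  have "F1 m n = (1)*n^3 + m*(m^2 + 2*m*n + n^2)" unfolding F1_def by algebra
  then show False by (rule L1[OF c _ _ assms(2,3,4)]) simp
qed

lemma F1_mn: assumes "coprime m n" "prime p" "p dvd F1 m n" "p dvd m + n" shows False
proof -
  have c: "coprime n (m+n)" using assms(1) by (rule cop_sum)
  have "F1 m n = (1)*n^3 + (m+n)*((m+n)^2 - (m+n)*n)" unfolding F1_def by algebra
  then show False by (rule L1[OF c _ _ assms(2,3,4)]) simp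
qed

lemma F2_n: assumes "coprime m n" "prime p" "p dvd F2 m n" "p dvd n" shows False
proof -
  have "F2 m n = (1)*m^3 + n*(- (m*n) - n^2)" unfolding F2_def by algebra
  then show False by (rule L1[OF assms(1) _ _ assms(2,3,4)]) simp
qed

lemma F2_m: assumes "coprime m n" "prime p" "p dvd F2 m n" "p dvd m" shows False
proof -
  have c: "coprime n m" using assms(1) by (simp add: coprime_commute)
  have "F2 m n = (-1)*n^3 + m*(m^2 - n^2)" unfolding F2_def by algebra
  then show False by (rule L1[OF c _ _ assms(2,3,4)]) simp
qed

lemma F2_mn: assumes "coprime m n" "prime p" "p dvd F2 m n" "p dvd m + n" shows False
proof -
  have c: "coprime n (m+n)" using assms(1) by (rule cop_sum)
  have "F2 m n = (-1)*n^3 + (m+n)*((m+n)^2 - 3*(m+n)*n + 2*n^2)" unfolding F2_def by algebra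
  then show False by (rule L1[OF c _ _ assms(2,3,4)]) simp
qed

lemma F3_n: assumes "coprime m n" "prime p" "p dvd F3 m n" "p dvd n" shows False
proof -
  have "F3 m n = (1)*m^3 + n*(2*m^2 + 3*m*n + n^2)" unfolding F3_def by algebra
  then show False by (rule L1[OF assms(1) _ _ assms(2,3,4)]) simp
qed

lemma F3_m: assumes "coprime m n" "prime p" "p dvd F3 m n" "p dvd m" shows False
proof -
  have c: "coprime n m" using assms(1) by (simp add: coprime_commute)
  have "F3 m n = (1)*n^3 + m*(m^2 + 2*m*n + 3*n^2)" unfolding F3_def by algebra
  then show False by (rule L1[OF c _ _ assms(2,3,4)]) simp
qed

lemma F3_mn: assumes "coprime m n" "prime p" "p dvd F3 m n" "p dvd m + n" shows False
proof -
  have c: "coprime n (m+n)" using assms(1) by (rule cop_sum)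
  have "F3 m n = (-1)*n^3 + (m+n)*((m+n)^2 - (m+n)*n + 2*n^2)" unfolding F3_def by algebra
  then show False by (rule L1[OF c _ _ assms(2,3,4)]) simp
qed

lemma GG_n: assumes "coprime m n" "prime p" "p dvd GG m n" "p dvd n" shows False
proof -
  have "GG m n = (-1)*m^9 + n*(- (2*m^8) - m^7*n - 9*m^6*n^2 - 19*m^5*n^3 + 26*m^3*n^5 + 21*m^2*n^6 + 7*m*n^7 + n^8)" unfolding GG_def by algebra
  then show False by (rule L1[OF assms(1) _ _ assms(2,3,4)]) simp
qed

lemma GG_m: assumes "coprime m n" "prime p" "p dvd GG m n" "p dvd m" shows False
proof -
  have c: "coprime n m" using assms(1) by (simp add: coprime_commute)
  have "GG m n = (1)*n^9 + m*(- (m^8) - 2*m^7*n - m^6*n^2 - 9*m^5*n^3 - 19*m^4*n^4 + 26*m^2*n^6 + 21*m*n^7 + 7*n^8)" unfolding GG_def by algebra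
  then show False by (rule L1[OF c _ _ assms(2,3,4)]) simp
qed

lemma GG_mn: assumes "coprime m n" "prime p" "p dvd GG m n" "p dvd m + n" shows False
proof -
  have c: "coprime n (m+n)" using assms(1) by (rule cop_sum)
  have "GG m n = (-1)*n^9 + (m+n)*(- ((m+n)^8) + 7*(m+n)^7*n - 21*(m+n)^6*n^2 + 26*(m+n)^5*n^3 - 19*(m+n)^3*n^5 + 9*(m+n)^2*n^6 - (m+n)*n^7 + 2*n^8)" unfolding GG_def by algebra
  then show False by (rule L1[OF c _ _ assms(2,3,4)]) simp
qed

lemma F1_F2_cop: assumes "coprime m n" "prime p" "p dvd F1 m n" "p dvd F2 m n" shows False
proof -
  have e1: "(- (m^2) + 2*n^2)*F1 m n + (m^2 + 2*m*n)*F2 m n = 2^1 * n^5" unfolding F1_def F2_def by algebra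
  have e2: "(n^2)*F1 m n + (2*m^2 + n^2)*F2 m n = 2^1 * m^5" unfolding F1_def F2_def by algebra
  show False by (rule L2[OF assms(1) F1_odd[OF assms(1)] e1 e2 assms(2,3,4)])
qed

lemma F1_F3_cop: assumes "coprime m n" "prime p" "p dvd F1 m n" "p dvd F3 m n" shows False
proof -
  have e1: "(m^2 + 2*m*n + 3*n^2)*F1 m n + (- (m^2) - 2*m*n - n^2)*F3 m n = 2^1 * n^5" unfolding F1_def F3_def by algebra
  have e2: "(- (m^2) - 5*m*n - 2*n^2)*F1 m n + (3*m^2 + m*n + 2*n^2)*F3 m n = 2^1 * m^5" unfolding F1_def F3_def by algebra
  show False by (rule L2[OF assms(1) F1_odd[OF assms(1)] e1 e2 assms(2,3,4)])
qed

lemma F1_GG_cop: assumes "coprime m n" "prime p" "p dvd F1 m n" "p dvd GG m n" shows False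
proof -
  have e1: "(m^7*n + 8*m^4*n^4 + 3*m^3*n^5 - 14*m^2*n^6 - 9*m*n^7 + 8*n^8)*F1 m n + (m*n)*GG m n = 2^3 * n^11" unfolding F1_def GG_def by algebra
  have e2: "(273*m^8 + 49*m^7*n + 175*m^6*n^2 + 2080*m^5*n^3 + 1387*m^4*n^4 - 2435*m^3*n^5 - 2618*m^2*n^6 - 971*m*n^7 - 151*n^8)*F1 m n + (265*m^2 + 65*m*n + 151*n^2)*GG m n = 2^3 * m^11" unfolding F1_def GG_def by algebra
  show False by (rule L2[OF assms(1) F1_odd[OF assms(1)] e1 e2 assms(2,3,4)])
qed

lemma F2_F3_cop: assumes "coprime m n" "prime p" "p dvd F2 m n" "p dvd F3 m n" shows False
proof -
  have e1: "(- (2*m^2) - 3*m*n - 4*n^2)*F2 m n + (2*m^2 - m*n - 2*n^2)*F3 m n = 2^1 * n^5" unfolding F2_def F3_def by algebra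
  have e2: "(m^2 - 2*m*n - n^2)*F2 m n + (m^2 - n^2)*F3 m n = 2^1 * m^5" unfolding F2_def F3_def by algebra
  show False by (rule L2[OF assms(1) F2_odd[OF assms(1)] e1 e2 assms(2,3,4)])
qed

lemma F2_GG_cop: assumes "coprime m n" "prime p" "p dvd F2 m n" "p dvd GG m n" shows False
proof -
  have e1: "(2*m^8 + 2*m^7*n - m^6*n^2 + 18*m^5*n^3 + 20*m^4*n^4 - 30*m^3*n^5 - 33*m^2*n^6 - 9*n^8)*F2 m n + (2*m^2 - 2*m*n - n^2)*GG m n = 2^3 * n^11" unfolding F2_def GG_def by algebra
  have e2: "(7*m^8 - 3*m^7*n + 4*m^6*n^2 - 6*m^5*n^3 - 27*m^4*n^4 - 21*m^3*n^5 - 7*m^2*n^6 - m*n^7)*F2 m n + (- (m^2) - m*n)*GG m n = 2^3 * m^11" unfolding F2_def GG_def by algebra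
  show False by (rule L2[OF assms(1) F2_odd[OF assms(1)] e1 e2 assms(2,3,4)])
qed

lemma F3_GG_cop: assumes "coprime m n" "prime p" "p dvd F3 m n" "p dvd GG m n" shows False
proof -
  have e1: "(151*m^8 + 237*m^7*n + 49*m^6*n^2 + 1338*m^5*n^3 + 2293*m^4*n^4 - 987*m^3*n^5 - 3500*m^2*n^6 - 1665*m*n^7 - 343*n^8)*F3 m n + (151*m^2 + 237*m*n + 351*n^2)*GG m n = 2^3 * n^11" unfolding F3_def GG_def by algebra
  have e2: "(11*m^8 - 10*m^7*n + 4*m^6*n^2 + 48*m^5*n^3 + 15*m^4*n^4 - 46*m^3*n^5 - 41*m^2*n^6 - 14*m*n^7 - 2*n^8)*F3 m n + (3*m^2 + 6*m*n + 2*n^2)*GG m n = 2^3 * m^11" unfolding F3_def GG_def by algebra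
  show False by (rule L2[OF assms(1) F3_odd[OF assms(1)] e1 e2 assms(2,3,4)])
qed

lemma F1_F2_unitp: assumes "coprime m n" "n > 0" "m \<noteq> 0" "m + n \<noteq> 0" "F1 m n = (1)*F2 m n" shows False
proof -
  have "F1 m n - (1)*F2 m n = n^1 * (2*m^2 + 2*m*n + 2*n^2)" unfolding F1_def F2_def by algebra
  then have H: "((2*m^2 + 2*m*n + 2*n^2)::int) = 0" using assms by simp
  have "(2)*n^2 = m*(-(2*m + 2*n))" using H by algebra
  then have "m dvd (2)*n^2" by (metis dvd_triv_left)
  then have "m dvd (2)" using assms(1) by (simp add: coprime_dvd_mult_left_iff)
  then have "\<bar>m\<bar> \<le> 2" using dvd_imp_le_int[of "2" m] by simp
  then have mc: "m = -2 \<or> m = -1 \<or> m = 0 \<or> m = 1 \<or> m = 2" by auto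
  have "(2)*m^2 = n*(-(2*m + 2*n))" using H by algebra
  then have "n dvd (2)*m^2" by (metis dvd_triv_left)
  then have "n dvd (2)" using assms(1) by (simp add: coprime_dvd_mult_left_iff coprime_commute)
  then have "n \<le> 2" using dvd_imp_le_int[of "2" n] assms(2) by simp
  then have nc: "n = 1 \<or> n = 2" using assms(2) by auto
  show False using mc nc H assms(3,4) by auto
qed

lemma F1_F2_unitm: assumes "coprime m n" "n > 0" "m \<noteq> 0" "m + n \<noteq> 0" "F1 m n = (-1)*F2 m n" shows False
proof -
  have "F1 m n - (-1)*F2 m n = m^2*(m+n)^1 * (2)" unfolding F1_def F2_def by algebra
  then have H: "((2)::int) = 0" using assms by simp
  then show False by simp
qed

lemma F1_F3_unitp: assumes "coprime m n" "n > 0" "m \<noteq> 0" "m + n \<noteq> 0" "F1 m n = (1)*F3 m n" shows False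
proof -
  have "F1 m n - (1)*F3 m n = m^1*n^2 * (- (2))" unfolding F1_def F3_def by algebra
  then have H: "((- (2))::int) = 0" using assms by simp
  then show False by simp
qed

lemma F1_F3_unitm: assumes "coprime m n" "n > 0" "m \<noteq> 0" "m + n \<noteq> 0" "F1 m n = (-1)*F3 m n" shows False
proof -
  have "F1 m n - (-1)*F3 m n = (m+n)^1 * (2*m^2 + 2*m*n + 2*n^2)" unfolding F1_def F3_def by algebra
  then have H: "((2*m^2 + 2*m*n + 2*n^2)::int) = 0" using assms by simp
  have "(2)*n^2 = m*(-(2*m + 2*n))" using H by algebra
  then have "m dvd (2)*n^2" by (metis dvd_triv_left)
  then have "m dvd (2)" using assms(1) by (simp add: coprime_dvd_mult_left_iff)
  then have "\<bar>m\<bar> \<le> 2" using dvd_imp_le_int[of "2" m] by simp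
  then have mc: "m = -2 \<or> m = -1 \<or> m = 0 \<or> m = 1 \<or> m = 2" by auto
  have "(2)*m^2 = n*(-(2*m + 2*n))" using H by algebra
  then have "n dvd (2)*m^2" by (metis dvd_triv_left)
  then have "n dvd (2)" using assms(1) by (simp add: coprime_dvd_mult_left_iff coprime_commute)
  then have "n \<le> 2" using dvd_imp_le_int[of "2" n] assms(2) by simp
  then have nc: "n = 1 \<or> n = 2" using assms(2) by auto
  show False using mc nc H assms(3,4) by auto
qed

lemma F1_GG_unitp: assumes "coprime m n" "n > 0" "m \<noteq> 0" "m + n \<noteq> 0" "GG m n = (1)*(F1 m n)^3" shows False
proof -
  have "GG m n - (1)*(F1 m n)^3 = m^1 * (- (2*m^8) - 8*m^7*n - 16*m^6*n^2 - 32*m^5*n^3 - 46*m^4*n^4 - 24*m^3*n^5 + 10*m^2*n^6 + 12*m*n^7 + 4*n^8)" unfolding GG_def F1_def by algebra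
  then have H: "((- (2*m^8) - 8*m^7*n - 16*m^6*n^2 - 32*m^5*n^3 - 46*m^4*n^4 - 24*m^3*n^5 + 10*m^2*n^6 + 12*m*n^7 + 4*n^8)::int) = 0" using assms by simp
  have "(4)*n^8 = m*(-(- (2*m^7) - 8*m^6*n - 16*m^5*n^2 - 32*m^4*n^3 - 46*m^3*n^4 - 24*m^2*n^5 + 10*m*n^6 + 12*n^7))" using H by algebra
  then have "m dvd (4)*n^8" by (metis dvd_triv_left)
  then have "m dvd (4)" using assms(1) by (simp add: coprime_dvd_mult_left_iff)
  then have "\<bar>m\<bar> \<le> 4" using dvd_imp_le_int[of "4" m] by simp
  then have mc: "m = -4 \<or> m = -3 \<or> m = -2 \<or> m = -1 \<or> m = 0 \<or> m = 1 \<or> m = 2 \<or> m = 3 \<or> m = 4" by auto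
  have "(-2)*m^8 = n*(-(- (8*m^7) - 16*m^6*n - 32*m^5*n^2 - 46*m^4*n^3 - 24*m^3*n^4 + 10*m^2*n^5 + 12*m*n^6 + 4*n^7))" using H by algebra
  then have "n dvd (-2)*m^8" by (metis dvd_triv_left)
  then have "n dvd (-2)" using assms(1) by (simp add: coprime_dvd_mult_left_iff coprime_commute)
  then have "n \<le> 2" using dvd_imp_le_int[of "-2" n] assms(2) by simp
  then have nc: "n = 1 \<or> n = 2" using assms(2) by auto
  show False using mc nc H assms(3,4) by auto
qed

lemma F1_GG_unitm: assumes "coprime m n" "n > 0" "m \<noteq> 0" "m + n \<noteq> 0" "GG m n = (-1)*(F1 m n)^3" shows False
proof -
  have "GG m n - (-1)*(F1 m n)^3 = (m+n)^1*n^1 * (4*m^7 + 10*m^6*n + 4*m^5*n^2 + 4*m^4*n^3 + 20*m^3*n^4 + 22*m^2*n^5 + 8*m*n^6 + 2*n^7)" unfolding GG_def F1_def by algebra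
  then have H: "((4*m^7 + 10*m^6*n + 4*m^5*n^2 + 4*m^4*n^3 + 20*m^3*n^4 + 22*m^2*n^5 + 8*m*n^6 + 2*n^7)::int) = 0" using assms by simp
  have "(2)*n^7 = m*(-(4*m^6 + 10*m^5*n + 4*m^4*n^2 + 4*m^3*n^3 + 20*m^2*n^4 + 22*m*n^5 + 8*n^6))" using H by algebra
  then have "m dvd (2)*n^7" by (metis dvd_triv_left)
  then have "m dvd (2)" using assms(1) by (simp add: coprime_dvd_mult_left_iff)
  then have "\<bar>m\<bar> \<le> 2" using dvd_imp_le_int[of "2" m] by simp
  then have mc: "m = -2 \<or> m = -1 \<or> m = 0 \<or> m = 1 \<or> m = 2" by auto
  have "(4)*m^7 = n*(-(10*m^6 + 4*m^5*n + 4*m^4*n^2 + 20*m^3*n^3 + 22*m^2*n^4 + 8*m*n^5 + 2*n^6))" using H by algebra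
  then have "n dvd (4)*m^7" by (metis dvd_triv_left)
  then have "n dvd (4)" using assms(1) by (simp add: coprime_dvd_mult_left_iff coprime_commute)
  then have "n \<le> 4" using dvd_imp_le_int[of "4" n] assms(2) by simp
  then have nc: "n = 1 \<or> n = 2 \<or> n = 3 \<or> n = 4" using assms(2) by auto
  show False using mc nc H assms(3,4) by auto
qed

lemma F2_F3_unitp: assumes "coprime m n" "n > 0" "m \<noteq> 0" "m + n \<noteq> 0" "F2 m n = (1)*F3 m n" shows False
proof -
  have "F2 m n - (1)*F3 m n = (m+n)^2*n^1 * (- (2))" unfolding F2_def F3_def by algebra
  then have H: "((- (2))::int) = 0" using assms by simp
  then show False by simp
qed

lemma F2_F3_unitm: assumes "coprime m n" "n > 0" "m \<noteq> 0" "m + n \<noteq> 0" "F2 m n = (-1)*F3 m n" shows False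
proof -
  have "F2 m n - (-1)*F3 m n = m^1 * (2*m^2 + 2*m*n + 2*n^2)" unfolding F2_def F3_def by algebra
  then have H: "((2*m^2 + 2*m*n + 2*n^2)::int) = 0" using assms by simp
  have "(2)*n^2 = m*(-(2*m + 2*n))" using H by algebra
  then have "m dvd (2)*n^2" by (metis dvd_triv_left)
  then have "m dvd (2)" using assms(1) by (simp add: coprime_dvd_mult_left_iff)
  then have "\<bar>m\<bar> \<le> 2" using dvd_imp_le_int[of "2" m] by simp
  then have mc: "m = -2 \<or> m = -1 \<or> m = 0 \<or> m = 1 \<or> m = 2" by auto
  have "(2)*m^2 = n*(-(2*m + 2*n))" using H by algebra
  then have "n dvd (2)*m^2" by (metis dvd_triv_left)
  then have "n dvd (2)" using assms(1) by (simp add: coprime_dvd_mult_left_iff coprime_commute)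
  then have "n \<le> 2" using dvd_imp_le_int[of "2" n] assms(2) by simp
  then have nc: "n = 1 \<or> n = 2" using assms(2) by auto
  show False using mc nc H assms(3,4) by auto
qed

lemma F2_GG_unitp: assumes "coprime m n" "n > 0" "m \<noteq> 0" "m + n \<noteq> 0" "GG m n = (1)*(F2 m n)^3" shows False
proof -
  have "GG m n - (1)*(F2 m n)^3 = (m+n)^1 * (- (2*m^8) + 2*m^6*n^2 - 8*m^5*n^3 - 14*m^4*n^4 + 8*m^3*n^5 + 16*m^2*n^6 + 8*m*n^7 + 2*n^8)" unfolding GG_def F2_def by algebra
  then have H: "((- (2*m^8) + 2*m^6*n^2 - 8*m^5*n^3 - 14*m^4*n^4 + 8*m^3*n^5 + 16*m^2*n^6 + 8*m*n^7 + 2*n^8)::int) = 0" using assms by simp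
  have "(2)*n^8 = m*(-(- (2*m^7) + 2*m^5*n^2 - 8*m^4*n^3 - 14*m^3*n^4 + 8*m^2*n^5 + 16*m*n^6 + 8*n^7))" using H by algebra
  then have "m dvd (2)*n^8" by (metis dvd_triv_left)
  then have "m dvd (2)" using assms(1) by (simp add: coprime_dvd_mult_left_iff)
  then have "\<bar>m\<bar> \<le> 2" using dvd_imp_le_int[of "2" m] by simp
  then have mc: "m = -2 \<or> m = -1 \<or> m = 0 \<or> m = 1 \<or> m = 2" by auto
  have "(-2)*m^8 = n*(-(2*m^6*n - 8*m^5*n^2 - 14*m^4*n^3 + 8*m^3*n^4 + 16*m^2*n^5 + 8*m*n^6 + 2*n^7))" using H by algebra
  then have "n dvd (-2)*m^8" by (metis dvd_triv_left)
  then have "n dvd (-2)" using assms(1) by (simp add: coprime_dvd_mult_left_iff coprime_commute)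
  then have "n \<le> 2" using dvd_imp_le_int[of "-2" n] assms(2) by simp
  then have nc: "n = 1 \<or> n = 2" using assms(2) by auto
  show False using mc nc H assms(3,4) by auto
qed

lemma F2_GG_unitm: assumes "coprime m n" "n > 0" "m \<noteq> 0" "m + n \<noteq> 0" "GG m n = (-1)*(F2 m n)^3" shows False
proof -
  have "GG m n - (-1)*(F2 m n)^3 = m^1*n^1 * (- (2*m^7) - 4*m^6*n - 12*m^5*n^2 - 16*m^4*n^3 + 6*m^3*n^4 + 28*m^2*n^5 + 18*m*n^6 + 4*n^7)" unfolding GG_def F2_def by algebra
  then have H: "((- (2*m^7) - 4*m^6*n - 12*m^5*n^2 - 16*m^4*n^3 + 6*m^3*n^4 + 28*m^2*n^5 + 18*m*n^6 + 4*n^7)::int) = 0" using assms by simp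
  have "(4)*n^7 = m*(-(- (2*m^6) - 4*m^5*n - 12*m^4*n^2 - 16*m^3*n^3 + 6*m^2*n^4 + 28*m*n^5 + 18*n^6))" using H by algebra
  then have "m dvd (4)*n^7" by (metis dvd_triv_left)
  then have "m dvd (4)" using assms(1) by (simp add: coprime_dvd_mult_left_iff)
  then have "\<bar>m\<bar> \<le> 4" using dvd_imp_le_int[of "4" m] by simp
  then have mc: "m = -4 \<or> m = -3 \<or> m = -2 \<or> m = -1 \<or> m = 0 \<or> m = 1 \<or> m = 2 \<or> m = 3 \<or> m = 4" by auto
  have "(-2)*m^7 = n*(-(- (4*m^6) - 12*m^5*n - 16*m^4*n^2 + 6*m^3*n^3 + 28*m^2*n^4 + 18*m*n^5 + 4*n^6))" using H by algebra
  then have "n dvd (-2)*m^7" by (metis dvd_triv_left)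
  then have "n dvd (-2)" using assms(1) by (simp add: coprime_dvd_mult_left_iff coprime_commute)
  then have "n \<le> 2" using dvd_imp_le_int[of "-2" n] assms(2) by simp
  then have nc: "n = 1 \<or> n = 2" using assms(2) by auto
  show False using mc nc H assms(3,4) by auto
qed

lemma F3_GG_unitp: assumes "coprime m n" "n > 0" "m \<noteq> 0" "m + n \<noteq> 0" "GG m n = (1)*(F3 m n)^3" shows False
proof -
  have "GG m n - (1)*(F3 m n)^3 = m^1*(m+n)^1 * (- (2*m^7) - 6*m^6*n - 16*m^5*n^2 - 40*m^4*n^3 - 54*m^3*n^4 - 30*m^2*n^5 - 10*m*n^6 - 2*n^7)" unfolding GG_def F3_def by algebra
  then have H: "((- (2*m^7) - 6*m^6*n - 16*m^5*n^2 - 40*m^4*n^3 - 54*m^3*n^4 - 30*m^2*n^5 - 10*m*n^6 - 2*n^7)::int) = 0" using assms by simp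
  have "(-2)*n^7 = m*(-(- (2*m^6) - 6*m^5*n - 16*m^4*n^2 - 40*m^3*n^3 - 54*m^2*n^4 - 30*m*n^5 - 10*n^6))" using H by algebra
  then have "m dvd (-2)*n^7" by (metis dvd_triv_left)
  then have "m dvd (-2)" using assms(1) by (simp add: coprime_dvd_mult_left_iff)
  then have "\<bar>m\<bar> \<le> 2" using dvd_imp_le_int[of "-2" m] by simp
  then have mc: "m = -2 \<or> m = -1 \<or> m = 0 \<or> m = 1 \<or> m = 2" by auto
  have "(-2)*m^7 = n*(-(- (6*m^6) - 16*m^5*n - 40*m^4*n^2 - 54*m^3*n^3 - 30*m^2*n^4 - 10*m*n^5 - 2*n^6))" using H by algebra
  then have "n dvd (-2)*m^7" by (metis dvd_triv_left)
  then have "n dvd (-2)" using assms(1) by (simp add: coprime_dvd_mult_left_iff coprime_commute)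
  then have "n \<le> 2" using dvd_imp_le_int[of "-2" n] assms(2) by simp
  then have nc: "n = 1 \<or> n = 2" using assms(2) by auto
  show False using mc nc H assms(3,4) by auto
qed

lemma F3_GG_unitm: assumes "coprime m n" "n > 0" "m \<noteq> 0" "m + n \<noteq> 0" "GG m n = (-1)*(F3 m n)^3" shows False
proof -
  have "GG m n - (-1)*(F3 m n)^3 = n^1 * (4*m^8 + 20*m^7*n + 38*m^6*n^2 + 56*m^5*n^3 + 84*m^4*n^4 + 92*m^3*n^5 + 54*m^2*n^6 + 16*m*n^7 + 2*n^8)" unfolding GG_def F3_def by algebra
  then have H: "((4*m^8 + 20*m^7*n + 38*m^6*n^2 + 56*m^5*n^3 + 84*m^4*n^4 + 92*m^3*n^5 + 54*m^2*n^6 + 16*m*n^7 + 2*n^8)::int) = 0" using assms by simp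
  have "(2)*n^8 = m*(-(4*m^7 + 20*m^6*n + 38*m^5*n^2 + 56*m^4*n^3 + 84*m^3*n^4 + 92*m^2*n^5 + 54*m*n^6 + 16*n^7))" using H by algebra
  then have "m dvd (2)*n^8" by (metis dvd_triv_left)
  then have "m dvd (2)" using assms(1) by (simp add: coprime_dvd_mult_left_iff)
  then have "\<bar>m\<bar> \<le> 2" using dvd_imp_le_int[of "2" m] by simp
  then have mc: "m = -2 \<or> m = -1 \<or> m = 0 \<or> m = 1 \<or> m = 2" by auto
  have "(4)*m^8 = n*(-(20*m^7 + 38*m^6*n + 56*m^5*n^2 + 84*m^4*n^3 + 92*m^3*n^4 + 54*m^2*n^5 + 16*m*n^6 + 2*n^7))" using H by algebra
  then have "n dvd (4)*m^8" by (metis dvd_triv_left)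
  then have "n dvd (4)" using assms(1) by (simp add: coprime_dvd_mult_left_iff coprime_commute)
  then have "n \<le> 4" using dvd_imp_le_int[of "4" n] assms(2) by simp
  then have nc: "n = 1 \<or> n = 2 \<or> n = 3 \<or> n = 4" using assms(2) by auto
  show False using mc nc H assms(3,4) by auto
qed

lemma coprime_by_primes:
  fixes x y :: int
  assumes "\<And>p. prime p \<Longrightarrow> p dvd x \<Longrightarrow> p dvd y \<Longrightarrow> False"
  shows "coprime x y"
proof (rule ccontr)
  assume nc: "\<not> coprime x y"
  show False
  proof (cases "gcd x y = 0")
    case True
    then have "x = 0" "y = 0" by auto
    then show False using assms[of 2] by simp
  next
    case False
    have "\<not> is_unit (gcd x y)" using nc by (simp add: coprime_iff_gcd_eq_1)
    then obtain p where "p dvd gcd x y" "prime p" using prime_divisor_exists False by blast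
    then show False using assms by auto
  qed
qed

lemma F1_F2_nu: assumes "coprime m n" "n > 0" "m \<noteq> 0" "m + n \<noteq> 0"
  shows "\<not> (is_unit (F1 m n) \<and> is_unit (F2 m n))"
proof
  assume u: "is_unit (F1 m n) \<and> is_unit (F2 m n)"
  then have "F1 m n = 1 \<or> F1 m n = -1" "F2 m n = 1 \<or> F2 m n = -1" by auto
  then have "F1 m n = (1)*F2 m n \<or> F1 m n = (-1)*F2 m n" by auto
  then show False using F1_F2_unitp[OF assms] F1_F2_unitm[OF assms] by blast
qed

lemma F1_F3_nu: assumes "coprime m n" "n > 0" "m \<noteq> 0" "m + n \<noteq> 0"
  shows "\<not> (is_unit (F1 m n) \<and> is_unit (F3 m n))"
proof
  assume u: "is_unit (F1 m n) \<and> is_unit (F3 m n)"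
  then have "F1 m n = 1 \<or> F1 m n = -1" "F3 m n = 1 \<or> F3 m n = -1" by auto
  then have "F1 m n = (1)*F3 m n \<or> F1 m n = (-1)*F3 m n" by auto
  then show False using F1_F3_unitp[OF assms] F1_F3_unitm[OF assms] by blast
qed

lemma F1_GG_nu: assumes "coprime m n" "n > 0" "m \<noteq> 0" "m + n \<noteq> 0"
  shows "\<not> (is_unit (F1 m n) \<and> is_unit (GG m n))"
proof
  assume u: "is_unit (F1 m n) \<and> is_unit (GG m n)"
  then have "F1 m n = 1 \<or> F1 m n = -1" "GG m n = 1 \<or> GG m n = -1" by auto
  then have "GG m n = (1)*(F1 m n)^3 \<or> GG m n = (-1)*(F1 m n)^3" by auto
  then show False using F1_GG_unitp[OF assms] F1_GG_unitm[OF assms] by blast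
qed

lemma F2_F3_nu: assumes "coprime m n" "n > 0" "m \<noteq> 0" "m + n \<noteq> 0"
  shows "\<not> (is_unit (F2 m n) \<and> is_unit (F3 m n))"
proof
  assume u: "is_unit (F2 m n) \<and> is_unit (F3 m n)"
  then have "F2 m n = 1 \<or> F2 m n = -1" "F3 m n = 1 \<or> F3 m n = -1" by auto
  then have "F2 m n = (1)*F3 m n \<or> F2 m n = (-1)*F3 m n" by auto
  then show False using F2_F3_unitp[OF assms] F2_F3_unitm[OF assms] by blast
qed

lemma F2_GG_nu: assumes "coprime m n" "n > 0" "m \<noteq> 0" "m + n \<noteq> 0"
  shows "\<not> (is_unit (F2 m n) \<and> is_unit (GG m n))"
proof
  assume u: "is_unit (F2 m n) \<and> is_unit (GG m n)"
  then have "F2 m n = 1 \<or> F2 m n = -1" "GG m n = 1 \<or> GG m n = -1" by auto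
  then have "GG m n = (1)*(F2 m n)^3 \<or> GG m n = (-1)*(F2 m n)^3" by auto
  then show False using F2_GG_unitp[OF assms] F2_GG_unitm[OF assms] by blast
qed

lemma F3_GG_nu: assumes "coprime m n" "n > 0" "m \<noteq> 0" "m + n \<noteq> 0"
  shows "\<not> (is_unit (F3 m n) \<and> is_unit (GG m n))"
proof
  assume u: "is_unit (F3 m n) \<and> is_unit (GG m n)"
  then have "F3 m n = 1 \<or> F3 m n = -1" "GG m n = 1 \<or> GG m n = -1" by auto
  then have "GG m n = (1)*(F3 m n)^3 \<or> GG m n = (-1)*(F3 m n)^3" by auto
  then show False using F3_GG_unitp[OF assms] F3_GG_unitm[OF assms] by blast
qed

lemma F1_copD: assumes "coprime m n" shows "coprime (F1 m n) (4*m^2*n^2*(m+n)^2)"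
proof (rule coprime_by_primes)
  fix p :: int assume p: "prime p" "p dvd F1 m n" "p dvd 4*m^2*n^2*(m+n)^2"
  have "p dvd 2^2 \<or> p dvd m^2 \<or> p dvd n^2 \<or> p dvd (m+n)^2" using p(1,3) by (simp add: prime_dvd_mult_iff)
  then have "p = 2 \<or> p dvd m \<or> p dvd n \<or> p dvd m+n" using p(1) prime_dvd_2pow prime_dvd_power by blast
  then show False using F1_odd[OF assms] p F1_m[OF assms p(1,2)] F1_n[OF assms p(1,2)] F1_mn[OF assms p(1,2)] by auto
qed

lemma F2_copD: assumes "coprime m n" shows "coprime (F2 m n) (4*m^2*n^2*(m+n)^2)"
proof (rule coprime_by_primes)
  fix p :: int assume p: "prime p" "p dvd F2 m n" "p dvd 4*m^2*n^2*(m+n)^2"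
  have "p dvd 2^2 \<or> p dvd m^2 \<or> p dvd n^2 \<or> p dvd (m+n)^2" using p(1,3) by (simp add: prime_dvd_mult_iff)
  then have "p = 2 \<or> p dvd m \<or> p dvd n \<or> p dvd m+n" using p(1) prime_dvd_2pow prime_dvd_power by blast
  then show False using F2_odd[OF assms] p F2_m[OF assms p(1,2)] F2_n[OF assms p(1,2)] F2_mn[OF assms p(1,2)] by auto
qed

lemma F3_copD: assumes "coprime m n" shows "coprime (F3 m n) (4*m^2*n^2*(m+n)^2)"
proof (rule coprime_by_primes)
  fix p :: int assume p: "prime p" "p dvd F3 m n" "p dvd 4*m^2*n^2*(m+n)^2"
  have "p dvd 2^2 \<or> p dvd m^2 \<or> p dvd n^2 \<or> p dvd (m+n)^2" using p(1,3) by (simp add: prime_dvd_mult_iff)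
  then have "p = 2 \<or> p dvd m \<or> p dvd n \<or> p dvd m+n" using p(1) prime_dvd_2pow prime_dvd_power by blast
  then show False using F3_odd[OF assms] p F3_m[OF assms p(1,2)] F3_n[OF assms p(1,2)] F3_mn[OF assms p(1,2)] by auto
qed

lemma GG_copD: assumes "coprime m n" shows "coprime (GG m n) (4*m^2*n^2*(m+n)^2)"
proof (rule coprime_by_primes)
  fix p :: int assume p: "prime p" "p dvd GG m n" "p dvd 4*m^2*n^2*(m+n)^2"
  have "p dvd 2^2 \<or> p dvd m^2 \<or> p dvd n^2 \<or> p dvd (m+n)^2" using p(1,3) by (simp add: prime_dvd_mult_iff)
  then have "p = 2 \<or> p dvd m \<or> p dvd n \<or> p dvd m+n" using p(1) prime_dvd_2pow prime_dvd_power by blast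
  then show False using GG_odd[OF assms] p GG_m[OF assms p(1,2)] GG_n[OF assms p(1,2)] GG_mn[OF assms p(1,2)] by auto
qed

theorem corollary2:
  fixes c :: rat
  assumes "has_rational_3_cycle c"
  shows "\<exists>p q r :: int. prime p \<and> prime q \<and> prime r \<and> p \<noteq> q \<and> p \<noteq> r \<and> q \<noteq> r \<and>
           p dvd rat_numerator (c ^ 3 + 2 * c ^ 2 + c + 1) \<and>
           q dvd rat_numerator (c ^ 3 + 2 * c ^ 2 + c + 1) \<and>
           r dvd rat_numerator (c ^ 3 + 2 * c ^ 2 + c + 1)"
proof -
  obtain a :: rat where a: "a \<noteq> 0" "a \<noteq> -1"
    "4*a^2*(1+a)^2*c = -(a^6+2*a^5+4*a^4+8*a^3+9*a^2+4*a+1)"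
    using cycle_param[OF assms] by blast
  obtain m n :: int where mn: "coprime m n" "n > 0" "m \<noteq> 0" "m + n \<noteq> 0"
    "of_int (4*m^2*n^2*(m+n)^2) * c = - of_int (m^6+2*m^5*n+4*m^4*n^2+8*m^3*n^3+9*m^2*n^4+4*m*n^5+n^6)"
    using to_int[OF a] by blast
  define D where "D = 4*m^2*n^2*(m+n)^2"
  define P where "P = m^6+2*m^5*n+4*m^4*n^2+8*m^3*n^3+9*m^2*n^4+4*m*n^5+n^6"
  define A where "A = F1 m n * F2 m n * F3 m n * GG m n"
  define v where "v = c ^ 3 + 2 * c ^ 2 + c + 1"
  have hD: "of_int D * c = - of_int P" using mn(5) unfolding D_def P_def .
  have iden: "- (P^3) + 2*P^2*D - P*D^2 + D^3 = A"
    unfolding A_def P_def D_def F1_def F2_def F3_def GG_def by algebra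
  have "v * of_int (D^3) = of_int (- (P^3) + 2*P^2*D - P*D^2 + D^3)"
    unfolding v_def of_int_mult of_int_add of_int_power of_int_minus of_int_diff of_int_numeral
    using hD by algebra
  then have vA: "v * of_int (D^3) = of_int A" by (simp only: iden)
  have D0: "D \<noteq> 0" unfolding D_def using mn by simp
  have cop: "coprime A (D^3)" unfolding A_def D_def
    using F1_copD[OF mn(1)] F2_copD[OF mn(1)] F3_copD[OF mn(1)] GG_copD[OF mn(1)] by simp
  have Adv: "A dvd rat_numerator v" using numer_dvd[OF vA _ cop] D0 by simp
  have nz: "F1 m n \<noteq> 0" "F2 m n \<noteq> 0" "F3 m n \<noteq> 0" "GG m n \<noteq> 0"
    using F1_odd[OF mn(1)] F2_odd[OF mn(1)] F3_odd[OF mn(1)] GG_odd[OF mn(1)] by auto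
  have "\<exists>p q r :: int. prime p \<and> prime q \<and> prime r \<and> p \<noteq> q \<and> p \<noteq> r \<and> q \<noteq> r \<and>
           p dvd A \<and> q dvd A \<and> r dvd A"
    unfolding A_def
    apply (rule three_primes[OF nz])
    apply (erule (2) F1_F2_cop[OF mn(1)])
    apply (erule (2) F1_F3_cop[OF mn(1)])
    apply (erule (2) F1_GG_cop[OF mn(1)])
    apply (erule (2) F2_F3_cop[OF mn(1)])
    apply (erule (2) F2_GG_cop[OF mn(1)])
    apply (erule (2) F3_GG_cop[OF mn(1)])
    apply (rule F1_F2_nu[OF mn(1-4)])
    apply (rule F1_F3_nu[OF mn(1-4)])
    apply (rule F1_GG_nu[OF mn(1-4)])
    apply (rule F2_F3_nu[OF mn(1-4)])
    apply (rule F2_GG_nu[OF mn(1-4)])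
    apply (rule F3_GG_nu[OF mn(1-4)])
    done
  then obtain p q r :: int where pqr: "prime p" "prime q" "prime r" "p \<noteq> q" "p \<noteq> r" "q \<noteq> r"
    "p dvd A" "q dvd A" "r dvd A" by blast
  show ?thesis unfolding v_def[symmetric]
    using pqr Adv dvd_trans by blast
qed

end
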